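(* Let $G=(V,E)$ be a graph with colouring $f:V\to\{B,R\}$ and let $E'$ be an optimal solution to the MIAE problem on $(G,f)$. Then for every red node $v$, exactly $\max(r(v)-b(v),0)$ edges of $E'\setminus E$ are incident to $v$, where $r(v),b(v)$ are the numbers of red and blue neighbours of $v$ in $G$.
   Context: Graphs are finite, simple and undirected. A colouring $f:V\to\{B,R\}$ partitions $V$ into the blue nodes $B=f^{-1}(B)$ and red nodes $R=f^{-1}(R)$. For an edge set $E'$ on $V$ and $v\in V$, let $b_{E'}(v)$ and $r_{E'}(v)$ be the numbers of blue and red neighbours of $v$ in $(V,E')$; write $b(v)=b_E(v)$, $r(v)=r_E(v)$. A node $v$ is under (majority) illusion in $(V,E')$ if $r_{E'}(v)>b_{E'}(v)$. Standing assumption: $|B|>|R|$. An optimal solution to MIAE is an edge set $E'\supseteq E$ on $V$ such that no node is under illusion in $(V,E')$ and $|E'\setminus E|$ is minimum among all such sets. *)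

theory Defs
  imports Main
begin

datatype colour = Blue | Red

definition simple_graph :: "'a set \<Rightarrow> 'a set set \<Rightarrow> bool" where
  "simple_graph V E \<longleftrightarrow> finite V \<and> (\<forall>e\<in>E. \<exists>u v. e = {u, v} \<and> u \<noteq> v \<and> u \<in> V \<and> v \<in> V)"

definition blue_nodes :: "'a set \<Rightarrow> ('a \<Rightarrow> colour) \<Rightarrow> 'a set" where
  "blue_nodes V f = {v \<in> V. f v = Blue}"

definition red_nodes :: "'a set \<Rightarrow> ('a \<Rightarrow> colour) \<Rightarrow> 'a set" where
  "red_nodes V f = {v \<in> V. f v = Red}"

definition neighbours :: "'a set \<Rightarrow> 'a set set \<Rightarrow> 'a \<Rightarrow> 'a set" where
  "neighbours V E v = {u \<in> V. {u, v} \<in> E}"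

definition blue_deg :: "'a set \<Rightarrow> 'a set set \<Rightarrow> ('a \<Rightarrow> colour) \<Rightarrow> 'a \<Rightarrow> nat" where
  "blue_deg V E f v = card {u \<in> neighbours V E v. f u = Blue}"

definition red_deg :: "'a set \<Rightarrow> 'a set set \<Rightarrow> ('a \<Rightarrow> colour) \<Rightarrow> 'a \<Rightarrow> nat" where
  "red_deg V E f v = card {u \<in> neighbours V E v. f u = Red}"

definition under_illusion :: "'a set \<Rightarrow> 'a set set \<Rightarrow> ('a \<Rightarrow> colour) \<Rightarrow> 'a \<Rightarrow> bool" where
  "under_illusion V E f v \<longleftrightarrow> red_deg V E f v > blue_deg V E f v"

definition miae_feasible :: "'a set \<Rightarrow> 'a set set \<Rightarrow> ('a \<Rightarrow> colour) \<Rightarrow> 'a set set \<Rightarrow> bool" where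
  "miae_feasible V E f E' \<longleftrightarrow> simple_graph V E' \<and> E \<subseteq> E' \<and> (\<forall>v\<in>V. \<not> under_illusion V E' f v)"

definition miae_optimal :: "'a set \<Rightarrow> 'a set set \<Rightarrow> ('a \<Rightarrow> colour) \<Rightarrow> 'a set set \<Rightarrow> bool" where
  "miae_optimal V E f E' \<longleftrightarrow> miae_feasible V E f E' \<and>
     (\<forall>E''. miae_feasible V E f E'' \<longrightarrow> card (E' - E) \<le> card (E'' - E))"

end

theory Submission
  imports Defs
begin

lemma nb_remove: "neighbours V (E'-{e}) w = neighbours V E' w - {x. {x,w} = e}"
  by (auto simp: neighbours_def)

lemma nb_finite: "finite V \<Longrightarrow> finite (neighbours V E w)"
  by (simp add: neighbours_def)

lemma deg_remove:
  assumes fin: "finite V" and red: "\<forall>x. {x,w} = e \<longrightarrow> f x = Red"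
  shows "blue_deg V (E'-{e}) f w = blue_deg V E' f w \<and> red_deg V (E'-{e}) f w \<le> red_deg V E' f w"
proof
  have "{x \<in> neighbours V (E'-{e}) w. f x = Blue} = {x \<in> neighbours V E' w. f x = Blue}"
    using red unfolding nb_remove by auto
  thus "blue_deg V (E'-{e}) f w = blue_deg V E' f w" by (simp add: blue_deg_def)
  have "{x \<in> neighbours V (E'-{e}) w. f x = Red} \<subseteq> {x \<in> neighbours V E' w. f x = Red}"
    unfolding nb_remove by auto
  thus "red_deg V (E'-{e}) f w \<le> red_deg V E' f w" unfolding red_deg_def
    by (intro card_mono) (use nb_finite[OF fin] in auto)
qed

lemma colour_cases: "c \<noteq> Blue \<Longrightarrow> c = Red" by (cases c) auto

theorem mainTheorem3:
  fixes V :: "'a set" and E E' :: "'a set set" and f :: "'a \<Rightarrow> colour"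
  assumes "simple_graph V E"
    and "card (blue_nodes V f) > card (red_nodes V f)"
    and "miae_optimal V E f E'"
    and "v \<in> red_nodes V f"
  shows "int (card {e \<in> E' - E. v \<in> e}) = max (int (red_deg V E f v) - int (blue_deg V E f v)) 0"
proof -
  have feas: "miae_feasible V E f E'" using assms(3) by (simp add: miae_optimal_def)
  have sg: "simple_graph V E'" and sub: "E \<subseteq> E'" and noill: "\<forall>w\<in>V. \<not> under_illusion V E' f w"
    using feas by (auto simp: miae_feasible_def)
  have fin: "finite V" using sg by (simp add: simple_graph_def)
  have E'sub: "E' \<subseteq> Pow V" using sg by (force simp: simple_graph_def)
  have finE': "finite E'" using finite_subset[OF E'sub] fin by simp
  have vV: "v \<in> V" and fv: "f v = Red" using assms(4) by (auto simp: red_nodes_def)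
  have edge: "\<And>e. e \<in> E' \<Longrightarrow> \<exists>a b. e = {a,b} \<and> a \<noteq> b \<and> a \<in> V \<and> b \<in> V"
    using sg by (simp add: simple_graph_def)
  have notsing: "{x} \<notin> E'" for x
  proof
    assume "{x} \<in> E'"
    then obtain a b where "{x} = {a,b}" "a \<noteq> b" using edge by blast
    thus False by (metis doubleton_eq_iff insert_absorb2)
  qed
  have infeas: "\<not> miae_feasible V E f (E' - {e})" if e: "e \<in> E' - E" for e
  proof
    assume F: "miae_feasible V E f (E' - {e})"
    have "card ((E' - {e}) - E) < card (E' - E)"
    proof -
      have "(E' - {e}) - E = (E' - E) - {e}" by auto
      moreover have "finite (E' - E)" using finE' by simp
      ultimately show ?thesis using e by (metis card_Diff1_less)
    qed
    moreover have "card (E' - E) \<le> card ((E' - {e}) - E)"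
      using assms(3) F by (simp add: miae_optimal_def)
    ultimately show False by simp
  qed
  have feasrem: "miae_feasible V E f (E' - {e})"
    if e: "e \<in> E' - E" and nill: "\<forall>w\<in>V. \<not> under_illusion V (E' - {e}) f w" for e
  proof -
    have "simple_graph V (E' - {e})" using sg by (simp add: simple_graph_def)
    moreover have "E \<subseteq> E' - {e}" using sub e by auto
    ultimately show ?thesis using nill by (simp add: miae_feasible_def)
  qed
  have safe: "\<not> under_illusion V (E' - {e}) f w"
    if "w \<in> V" "\<forall>x. {x,w} = e \<longrightarrow> f x = Red" for e w
  proof -
    have "\<not> under_illusion V E' f w" using noill that(1) by blast
    thus ?thesis using deg_remove[OF fin that(2), of E'] by (simp add: under_illusion_def)
  qed
  define M where "M = {u \<in> V. {u,v} \<in> E' - E}"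
  have Mne: "u \<noteq> v" if "u \<in> M" for u using that notsing by (auto simp: M_def)
  have Mblue: "f u = Blue" if uM: "u \<in> M" for u
  proof (rule ccontr)
    assume "f u \<noteq> Blue"
    hence fu: "f u = Red" by (rule colour_cases)
    have e: "{u,v} \<in> E' - E" using uM by (simp add: M_def)
    have "\<forall>w\<in>V. \<not> under_illusion V (E' - {{u,v}}) f w"
    proof
      fix w assume "w \<in> V"
      moreover have "\<forall>x. {x,w} = {u,v} \<longrightarrow> f x = Red"
        using fu fv by (auto simp: doubleton_eq_iff)
      ultimately show "\<not> under_illusion V (E' - {{u,v}}) f w" by (rule safe)
    qed
    thus False using infeas[OF e] feasrem[OF e] by blast
  qed
  have A: "{e \<in> E' - E. v \<in> e} = (\<lambda>u. {u,v}) ` M"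
  proof
    show "{e \<in> E' - E. v \<in> e} \<subseteq> (\<lambda>u. {u,v}) ` M"
    proof
      fix e assume "e \<in> {e \<in> E' - E. v \<in> e}"
      hence e: "e \<in> E'" "e \<notin> E" "v \<in> e" by auto
      then obtain a b where ab: "e = {a,b}" "a \<in> V" "b \<in> V" using edge by blast
      show "e \<in> (\<lambda>u. {u,v}) ` M"
      proof (cases "a = v")
        case True
        hence "e = {b,v}" using ab by auto
        thus ?thesis using e ab by (auto simp: M_def)
      next
        case False
        hence "b = v" using ab e by auto
        thus ?thesis using e ab by (auto simp: M_def)
      qed
    qed
    show "(\<lambda>u. {u,v}) ` M \<subseteq> {e \<in> E' - E. v \<in> e}" by (auto simp: M_def)
  qed
  have inj: "inj_on (\<lambda>u. {u,v}) M"
    by (auto simp: inj_on_def doubleton_eq_iff)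
  have cardA: "card {e \<in> E' - E. v \<in> e} = card M"
    unfolding A using card_image[OF inj] .
  have finM: "finite M" using fin by (simp add: M_def)
  have nb': "neighbours V E' v = neighbours V E v \<union> M"
    using sub by (auto simp: neighbours_def M_def)
  have disj: "neighbours V E v \<inter> M = {}" by (auto simp: neighbours_def M_def)
  have redeq: "red_deg V E' f v = red_deg V E f v"
  proof -
    have "{u \<in> neighbours V E' v. f u = Red} = {u \<in> neighbours V E v. f u = Red}"
      unfolding nb' using Mblue by auto
    thus ?thesis by (simp add: red_deg_def)
  qed
  have blueeq: "blue_deg V E' f v = blue_deg V E f v + card M"
  proof -
    have "{u \<in> neighbours V E' v. f u = Blue} = {u \<in> neighbours V E v. f u = Blue} \<union> M"
      unfolding nb' using Mblue by auto
    moreover have "{u \<in> neighbours V E v. f u = Blue} \<inter> M = {}" using disj by auto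
    moreover have "finite {u \<in> neighbours V E v. f u = Blue}" using nb_finite[OF fin] by simp
    ultimately show ?thesis using finM by (simp add: blue_deg_def card_Un_disjoint)
  qed
  have le: "red_deg V E f v \<le> blue_deg V E f v + card M"
    using noill vV redeq blueeq by (auto simp: under_illusion_def)
  show ?thesis
  proof (cases "M = {}")
    case True
    thus ?thesis using cardA le by simp
  next
    case False
    then obtain u where uM: "u \<in> M" by blast
    have e: "{u,v} \<in> E' - E" using uM by (simp add: M_def)
    have uv: "u \<noteq> v" using Mne uM .
    have fu: "f u = Blue" using Mblue uM .
    have uV: "u \<in> V" using uM by (simp add: M_def)
    have "\<exists>w\<in>V. under_illusion V (E' - {{u,v}}) f w"
      using infeas[OF e] feasrem[OF e] by blast
    then obtain w where wV: "w \<in> V" and ill: "under_illusion V (E' - {{u,v}}) f w" by blast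
    have wv: "w = v"
    proof (rule ccontr)
      assume "w \<noteq> v"
      hence "\<forall>x. {x,w} = {u,v} \<longrightarrow> f x = Red"
        using fv by (auto simp: doubleton_eq_iff)
      thus False using safe[OF wV] ill by blast
    qed
    have bset: "{x \<in> neighbours V (E' - {{u,v}}) v. f x = Blue} = {x \<in> neighbours V E' v. f x = Blue} - {u}"
      unfolding nb_remove using uv by (auto simp: doubleton_eq_iff)
    have uin: "u \<in> {x \<in> neighbours V E' v. f x = Blue}"
      using e uV fu by (auto simp: neighbours_def)
    have b1: "blue_deg V (E' - {{u,v}}) f v = blue_deg V E' f v - 1"
      unfolding blue_deg_def bset using uin by (simp add: card_Diff_singleton)
    have rset: "{x \<in> neighbours V (E' - {{u,v}}) v. f x = Red} = {x \<in> neighbours V E' v. f x = Red}"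
      unfolding nb_remove using uv fu by (auto simp: doubleton_eq_iff)
    have r1: "red_deg V (E' - {{u,v}}) f v = red_deg V E' f v"
      unfolding red_deg_def rset ..
    have "card M > 0" using False finM by auto
    hence "red_deg V E f v = blue_deg V E f v + card M"
      using ill wv b1 r1 redeq blueeq le by (simp add: under_illusion_def)
    thus ?thesis using cardA by simp
  qed
qed

end
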